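(* Let $k$ be an algebraically closed field of characteristic not $2$ and let $D(\Lambda_2)$ be the $k$-algebra generated by $x,X,g,G$ subject to $x^2=X^2=0$, $g^2=G^2=1$, $gG=Gg$, $gx=-xg$, $gX=-Xg$, $Gx=-xG$, $GX=-XG$, $xX+Xx=1-gG$. For $\alpha,\beta\in k$ not both zero let $H_{\alpha\beta}$ be the subalgebra of $D(\Lambda_2)$ generated by $g$, $G$ and $\alpha x+\beta X$. Then $D(\Lambda_2)$ is free as a left $H_{\alpha\beta}$-module. *)

theory Defs
  imports "HOL-Computational_Algebra.Polynomial"
begin

text \<open>Free (noncommutative, unital) k-algebra on the four generators x, X, g, G:
  finitely supported functions from words to k, with concatenation-convolution product.\<close>

datatype gen = Gx | GX | Gg | GG

type_synonym 'k falg = "gen list \<Rightarrow> 'k"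

definition fa_carrier :: "('k::field) falg set" where
  "fa_carrier = {f. finite {w. f w \<noteq> 0}}"

definition fa_zero :: "('k::field) falg" where "fa_zero = (\<lambda>w. 0)"
definition fa_one :: "('k::field) falg" where "fa_one = (\<lambda>w. if w = [] then 1 else 0)"
definition fa_var :: "gen \<Rightarrow> ('k::field) falg" where
  "fa_var a = (\<lambda>w. if w = [a] then 1 else 0)"
definition fa_add :: "('k::field) falg \<Rightarrow> 'k falg \<Rightarrow> 'k falg" where
  "fa_add f g = (\<lambda>w. f w + g w)"
definition fa_smult :: "'k::field \<Rightarrow> 'k falg \<Rightarrow> 'k falg" where
  "fa_smult c f = (\<lambda>w. c * f w)"
definition fa_sub :: "('k::field) falg \<Rightarrow> 'k falg \<Rightarrow> 'k falg" where
  "fa_sub f g = (\<lambda>w. f w - g w)"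
definition fa_mult :: "('k::field) falg \<Rightarrow> 'k falg \<Rightarrow> 'k falg" where
  "fa_mult f g = (\<lambda>w. \<Sum>i\<le>length w. f (take i w) * g (drop i w))"

definition fa_sum :: "('b \<Rightarrow> ('k::field) falg) \<Rightarrow> 'b set \<Rightarrow> 'k falg" where
  "fa_sum F S = (\<lambda>w. \<Sum>b\<in>S. F b w)"

abbreviation "vx \<equiv> fa_var Gx"
abbreviation "vX \<equiv> fa_var GX"
abbreviation "vg \<equiv> fa_var Gg"
abbreviation "vG \<equiv> fa_var GG"

definition DL2_relations :: "('k::field) falg set" where
  "DL2_relations =
    { fa_mult vx vx, fa_mult vX vX,
      fa_sub (fa_mult vg vg) fa_one, fa_sub (fa_mult vG vG) fa_one,
      fa_sub (fa_mult vg vG) (fa_mult vG vg),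
      fa_add (fa_mult vg vx) (fa_mult vx vg),
      fa_add (fa_mult vg vX) (fa_mult vX vg),
      fa_add (fa_mult vG vx) (fa_mult vx vG),
      fa_add (fa_mult vG vX) (fa_mult vX vG),
      fa_sub (fa_add (fa_mult vx vX) (fa_mult vX vx)) (fa_sub fa_one (fa_mult vg vG)) }"

text \<open>The two-sided ideal of the free algebra generated by the relations;
  D(Lambda_2) is the free algebra modulo this ideal.\<close>
inductive_set DL2_ideal :: "('k::field) falg set" where
  rel: "r \<in> DL2_relations \<Longrightarrow> r \<in> DL2_ideal"
| zero: "fa_zero \<in> DL2_ideal"
| add: "a \<in> DL2_ideal \<Longrightarrow> b \<in> DL2_ideal \<Longrightarrow> fa_add a b \<in> DL2_ideal"
| mult: "a \<in> DL2_ideal \<Longrightarrow> p \<in> fa_carrier \<Longrightarrow> q \<in> fa_carrier \<Longrightarrow>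
         fa_mult (fa_mult p a) q \<in> DL2_ideal"

text \<open>Preimage in the free algebra of the subalgebra H_{alpha beta} generated by
  g, G and alpha x + beta X (a unital subalgebra).\<close>
inductive_set H_sub :: "'k::field \<Rightarrow> 'k \<Rightarrow> 'k falg set" for \<alpha> \<beta> where
  one: "fa_one \<in> H_sub \<alpha> \<beta>"
| gen_g: "vg \<in> H_sub \<alpha> \<beta>"
| gen_G: "vG \<in> H_sub \<alpha> \<beta>"
| gen_y: "fa_add (fa_smult \<alpha> vx) (fa_smult \<beta> vX) \<in> H_sub \<alpha> \<beta>"
| add: "a \<in> H_sub \<alpha> \<beta> \<Longrightarrow> b \<in> H_sub \<alpha> \<beta> \<Longrightarrow> fa_add a b \<in> H_sub \<alpha> \<beta>"
| smult: "a \<in> H_sub \<alpha> \<beta> \<Longrightarrow> fa_smult c a \<in> H_sub \<alpha> \<beta>"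
| mult: "a \<in> H_sub \<alpha> \<beta> \<Longrightarrow> b \<in> H_sub \<alpha> \<beta> \<Longrightarrow> fa_mult a b \<in> H_sub \<alpha> \<beta>"

text \<open>D(Lambda_2) is free as a left H-module: there is a family B of elements (given by
  representatives in the free algebra) such that every element of D(Lambda_2) is a finite
  H-linear combination of B (modulo the ideal), and such combinations are unique, i.e.
  a combination that vanishes in D(Lambda_2) has all coefficients vanishing in D(Lambda_2).\<close>
definition DL2_free_left_module_over_H :: "'k::field \<Rightarrow> 'k \<Rightarrow> bool" where
  "DL2_free_left_module_over_H \<alpha> \<beta> \<longleftrightarrow>
    (\<exists>B \<subseteq> (fa_carrier :: 'k falg set).
      (\<forall>f\<in>fa_carrier. \<exists>c. (\<forall>b\<in>B. c b \<in> H_sub \<alpha> \<beta>) \<and> finite {b\<in>B. c b \<noteq> fa_zero} \<and>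
          fa_sub f (fa_sum (\<lambda>b. fa_mult (c b) b) {b\<in>B. c b \<noteq> fa_zero}) \<in> DL2_ideal) \<and>
      (\<forall>c. (\<forall>b\<in>B. c b \<in> H_sub \<alpha> \<beta>) \<and> finite {b\<in>B. c b \<noteq> fa_zero} \<and>
          fa_sum (\<lambda>b. fa_mult (c b) b) {b\<in>B. c b \<noteq> fa_zero} \<in> DL2_ideal
          \<longrightarrow> (\<forall>b\<in>B. c b \<in> DL2_ideal)))"

definition algebraically_closed_field :: "'k::field itself \<Rightarrow> bool" where
  "algebraically_closed_field _ \<longleftrightarrow>
     (\<forall>p :: 'k poly. degree p \<ge> 1 \<longrightarrow> (\<exists>z. poly p z = 0))"

end

theory Submission
  imports Defs
begin

definition supp :: "('k::field) falg \<Rightarrow> gen list set" where "supp f = {w. f w \<noteq> 0}"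
definition delta :: "gen list \<Rightarrow> ('k::field) falg" where "delta w = (\<lambda>u. if u = w then 1 else 0)"

lemma carrier_iff: "f \<in> fa_carrier \<longleftrightarrow> finite (supp f)"
  by (simp add: fa_carrier_def supp_def)

lemma supp_add: "supp (fa_add f g) \<subseteq> supp f \<union> supp g"
  by (auto simp: supp_def fa_add_def)
lemma supp_smult: "supp (fa_smult c f) \<subseteq> supp f"
  by (auto simp: supp_def fa_smult_def)
lemma supp_sub: "supp (fa_sub f g) \<subseteq> supp f \<union> supp g"
  by (auto simp: supp_def fa_sub_def)

lemma supp_mult: "supp (fa_mult f g) \<subseteq> (\<lambda>(u,v). u @ v) ` (supp f \<times> supp g)"
proof
  fix w assume "w \<in> supp (fa_mult f g)"
  then have "(\<Sum>i\<le>length w. f (take i w) * g (drop i w)) \<noteq> 0"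
    by (simp add: supp_def fa_mult_def)
  then obtain i where "f (take i w) * g (drop i w) \<noteq> 0"
    by (meson sum.not_neutral_contains_not_neutral)
  then show "w \<in> (\<lambda>(u,v). u @ v) ` (supp f \<times> supp g)"
    by (simp add: supp_def image_iff) (metis append_take_drop_id)
qed

lemma carrier_add: "f \<in> fa_carrier \<Longrightarrow> g \<in> fa_carrier \<Longrightarrow> fa_add f g \<in> fa_carrier"
  using supp_add carrier_iff by (metis finite_Un finite_subset)
lemma carrier_sub: "f \<in> fa_carrier \<Longrightarrow> g \<in> fa_carrier \<Longrightarrow> fa_sub f g \<in> fa_carrier"
  using supp_sub carrier_iff by (metis finite_Un finite_subset)
lemma carrier_smult: "f \<in> fa_carrier \<Longrightarrow> fa_smult c f \<in> fa_carrier"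
  using supp_smult carrier_iff by (metis finite_subset)
lemma carrier_mult: "f \<in> fa_carrier \<Longrightarrow> g \<in> fa_carrier \<Longrightarrow> fa_mult f g \<in> fa_carrier"
  using supp_mult carrier_iff by (metis finite_SigmaI finite_imageI finite_subset)
lemma carrier_zero: "fa_zero \<in> fa_carrier" by (simp add: fa_carrier_def fa_zero_def)
lemma carrier_one: "fa_one \<in> fa_carrier" by (simp add: fa_carrier_def fa_one_def)
lemma carrier_var: "fa_var a \<in> fa_carrier" by (simp add: fa_carrier_def fa_var_def)
lemma carrier_delta: "delta w \<in> fa_carrier" by (simp add: fa_carrier_def delta_def)

lemma mult_var_left:
  "fa_mult (fa_var a) h u = (case u of [] \<Rightarrow> 0 | b#u' \<Rightarrow> if b = a then h u' else 0)"
proof (cases u)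
  case Nil then show ?thesis by (simp add: fa_mult_def fa_var_def)
next
  case (Cons b u')
  have "fa_mult (fa_var a) h u = (\<Sum>i\<le>Suc (length u'). fa_var a (take i (b#u')) * h (drop i (b#u')))"
    by (simp add: fa_mult_def Cons)
  also have "\<dots> = fa_var a [] * h (b#u') + (\<Sum>i\<le>length u'. fa_var a (take (Suc i) (b#u')) * h (drop (Suc i) (b#u')))"
    by (subst sum.atMost_Suc_shift) simp
  also have "\<dots> = (\<Sum>i\<le>length u'. fa_var a (b # take i u') * h (drop i u'))"
    by (simp add: fa_var_def)
  also have "\<dots> = (\<Sum>i\<in>{0}. fa_var a (b # take i u') * h (drop i u'))"
    by (rule sum.mono_neutral_right) (auto simp: fa_var_def)
  finally show ?thesis using Cons by (simp add: fa_var_def)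
qed

lemma mult_one_left: "fa_mult fa_one f = f"
proof
  fix u
  have "fa_mult fa_one f u = (\<Sum>i\<in>{0}. fa_one (take i u) * f (drop i u))"
    unfolding fa_mult_def by (rule sum.mono_neutral_right) (auto simp: fa_one_def)
  then show "fa_mult fa_one f u = f u" by (simp add: fa_one_def)
qed

lemma mult_one_right: "fa_mult f fa_one = f"
proof
  fix u
  have "fa_mult f fa_one u = (\<Sum>i\<in>{length u}. f (take i u) * fa_one (drop i u))"
    unfolding fa_mult_def by (rule sum.mono_neutral_right) (auto simp: fa_one_def)
  then show "fa_mult f fa_one u = f u" by (simp add: fa_one_def)
qed

lemma delta_Nil: "delta [] = fa_one" by (simp add: delta_def fa_one_def)
lemma delta_Cons: "delta (a # w) = fa_mult (fa_var a) (delta w)"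
  by (rule ext) (auto simp: mult_var_left delta_def split: list.split)

lemma mult_add_left: "fa_mult (fa_add f g) h = fa_add (fa_mult f h) (fa_mult g h)"
  by (simp add: fa_mult_def fa_add_def distrib_right sum.distrib)
lemma mult_add_right: "fa_mult h (fa_add f g) = fa_add (fa_mult h f) (fa_mult h g)"
  by (simp add: fa_mult_def fa_add_def distrib_left sum.distrib)
lemma mult_smult_left: "fa_mult (fa_smult c f) h = fa_smult c (fa_mult f h)"
  by (simp add: fa_mult_def fa_smult_def sum_distrib_left mult.assoc)
lemma mult_smult_right: "fa_mult h (fa_smult c f) = fa_smult c (fa_mult h f)"
  by (simp add: fa_mult_def fa_smult_def sum_distrib_left algebra_simps)

lemma mult_sum_left: "fa_mult (fa_sum F S) h = fa_sum (\<lambda>s. fa_mult (F s) h) S"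
  by (rule ext) (simp add: fa_mult_def fa_sum_def sum_distrib_right sum.swap[of _ S])

lemma decomp: "f \<in> fa_carrier \<Longrightarrow> f = fa_sum (\<lambda>w. fa_smult (f w) (delta w)) (supp f)"
proof (rule ext)
  fix u assume f: "f \<in> fa_carrier"
  have "fa_sum (\<lambda>w. fa_smult (f w) (delta w)) (supp f) u = (\<Sum>w\<in>supp f. if w = u then f w else 0)"
    unfolding fa_sum_def fa_smult_def delta_def by (rule sum.cong) auto
  also have "\<dots> = f u" using f by (simp add: carrier_iff supp_def)
  finally show "f u = fa_sum (\<lambda>w. fa_smult (f w) (delta w)) (supp f) u" by simp
qed

lemma var_assoc: "fa_mult (fa_var a) (fa_mult k h) = fa_mult (fa_mult (fa_var a) k) h"
proof
  fix u show "fa_mult (fa_var a) (fa_mult k h) u = fa_mult (fa_mult (fa_var a) k) h u"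
  proof (cases u)
    case Nil then show ?thesis by (simp add: mult_var_left fa_mult_def)
  next
    case (Cons b u')
    have "fa_mult (fa_mult (fa_var a) k) h u = (\<Sum>i\<le>Suc (length u'). fa_mult (fa_var a) k (take i (b#u')) * h (drop i (b#u')))"
      by (simp add: fa_mult_def Cons)
    also have "\<dots> = fa_mult (fa_var a) k [] * h (b#u') + (\<Sum>i\<le>length u'. fa_mult (fa_var a) k (take (Suc i) (b#u')) * h (drop (Suc i) (b#u')))"
      by (subst sum.atMost_Suc_shift) simp
    also have "\<dots> = (\<Sum>i\<le>length u'. (if b = a then k (take i u') else 0) * h (drop i u'))"
      by (simp add: mult_var_left)
    also have "\<dots> = fa_mult (fa_var a) (fa_mult k h) u"
      by (subst mult_var_left, cases "b = a") (auto simp: Cons fa_mult_def)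
    finally show ?thesis by simp
  qed
qed

lemma delta_assoc: "fa_mult (delta w) (fa_mult g h) = fa_mult (fa_mult (delta w) g) h"
proof (induction w)
  case Nil then show ?case by (simp add: delta_Nil mult_one_left)
next
  case (Cons a w)
  show ?case unfolding delta_Cons
    by (simp add: var_assoc[symmetric] Cons)
qed

lemma fa_assoc:
  assumes "f \<in> fa_carrier" shows "fa_mult f (fa_mult g h) = fa_mult (fa_mult f g) h"
proof -
  have "fa_mult f (fa_mult g h) = fa_sum (\<lambda>w. fa_smult (f w) (fa_mult (delta w) (fa_mult g h))) (supp f)"
    by (subst decomp[OF assms]) (simp add: mult_sum_left mult_smult_left)
  also have "\<dots> = fa_sum (\<lambda>w. fa_smult (f w) (fa_mult (fa_mult (delta w) g) h)) (supp f)"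
    by (simp add: delta_assoc)
  also have "\<dots> = fa_mult (fa_mult f g) h"
    by (subst (2) decomp[OF assms]) (simp add: mult_sum_left mult_smult_left)
  finally show ?thesis .
qed

type_synonym 'k vec = "bool \<times> bool \<times> bool \<times> bool \<Rightarrow> 'k"

definition sg :: "bool \<Rightarrow> bool \<Rightarrow> 'k::field" where "sg a b = (if a = b then 1 else -1)"

fun rgen :: "gen \<Rightarrow> ('k::field) vec \<Rightarrow> 'k vec" where
  "rgen Gg v = (\<lambda>(a,b,c,d). v (\<not>a,b,c,d))"
| "rgen GG v = (\<lambda>(a,b,c,d). v (a,\<not>b,c,d))"
| "rgen Gx v = (\<lambda>(a,b,c,d). if c then sg a b * v (a,b,False,d) else 0)"
| "rgen GX v = (\<lambda>(a,b,c,d). if c then (if d then - (sg a b * v (a,b,True,False)) else 0)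
      else if d then sg a b * (v (a,b,False,False) + v (a,b,True,True) - v (\<not>a,\<not>b,True,True))
      else sg a b * (v (a,b,True,False) - v (\<not>a,\<not>b,True,False)))"

primrec rword :: "gen list \<Rightarrow> ('k::field) vec \<Rightarrow> 'k vec" where
  "rword [] v = v"
| "rword (a # w) v = rgen a (rword w v)"

definition rho :: "('k::field) falg \<Rightarrow> 'k vec \<Rightarrow> 'k vec" where
  "rho f v = (\<lambda>i. \<Sum>w\<in>supp f. f w * rword w v i)"

definition lin :: "(('k::field) vec \<Rightarrow> 'k vec) \<Rightarrow> bool" where
  "lin T \<longleftrightarrow> (\<forall>u v. T (\<lambda>i. u i + v i) = (\<lambda>i. T u i + T v i)) \<and> (\<forall>c u. T (\<lambda>i. c * u i) = (\<lambda>i. c * T u i))"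

lemma linD1: "lin T \<Longrightarrow> T (\<lambda>i. u i + v i) = (\<lambda>i. T u i + T v i)"
  unfolding lin_def by (elim conjE allE)
lemma linD2: "lin T \<Longrightarrow> T (\<lambda>i. c * u i) = (\<lambda>i. c * T u i)"
  unfolding lin_def by (elim conjE allE)
lemma linI: "(\<And>u v. T (\<lambda>i. u i + v i) = (\<lambda>i. T u i + T v i)) \<Longrightarrow> (\<And>c u. T (\<lambda>i. c * u i) = (\<lambda>i. c * T u i)) \<Longrightarrow> lin T"
  unfolding lin_def by blast

lemma lin_rgen: "lin (rgen a)"
  apply (cases a) apply (simp_all add: lin_def fun_eq_iff split: prod.splits) apply (auto simp: algebra_simps) done

lemma lin_rword: "lin (rword w)"
proof (induction w)
  case Nil then show ?case by (simp add: lin_def)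
next
  case (Cons a w)
  note h1 = linD1[OF Cons] and h2 = linD2[OF Cons]
  note g1 = linD1[OF lin_rgen[of a]] and g2 = linD2[OF lin_rgen[of a]]
  show ?case by (rule linI) (simp_all add: h1 h2 g1 g2)
qed

lemma lin_zero: "lin T \<Longrightarrow> T (\<lambda>i. 0) = (\<lambda>i. 0)"
proof -
  assume "lin T"
  from linD2[OF this, of 0 "\<lambda>i. 0"] show ?thesis by simp
qed

lemma lin_sum:
  assumes "lin T" "finite S"
  shows "T (\<lambda>i. \<Sum>s\<in>S. c s * u s i) = (\<lambda>i. \<Sum>s\<in>S. c s * T (u s) i)"
  using assms(2)
proof (induction S)
  case empty then show ?case using lin_zero[OF assms(1)] by simp
next
  case (insert x S)
  have "T (\<lambda>i. \<Sum>s\<in>insert x S. c s * u s i) = T (\<lambda>i. c x * u x i + (\<Sum>s\<in>S. c s * u s i))"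
    using insert by simp
  also have "\<dots> = (\<lambda>i. T (\<lambda>i. c x * u x i) i + T (\<lambda>i. \<Sum>s\<in>S. c s * u s i) i)"
    by (rule linD1[OF assms(1)])
  also have "\<dots> = (\<lambda>i. c x * T (u x) i + (\<Sum>s\<in>S. c s * T (u s) i))"
    using insert by (simp add: linD2[OF assms(1)])
  finally show ?case using insert by simp
qed

lemma rho_superset:
  assumes "finite S" "supp f \<subseteq> S"
  shows "rho f v = (\<lambda>i. \<Sum>w\<in>S. f w * rword w v i)"
  unfolding rho_def
  by (rule ext, rule sum.mono_neutral_left) (use assms in \<open>auto simp: supp_def\<close>)

lemma rho_add:
  assumes "f \<in> fa_carrier" "g \<in> fa_carrier"
  shows "rho (fa_add f g) v = (\<lambda>i. rho f v i + rho g v i)"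
proof -
  have fin: "finite (supp f \<union> supp g)" using assms by (simp add: carrier_iff)
  show ?thesis
    using rho_superset[OF fin, of "fa_add f g"] rho_superset[OF fin, of f] rho_superset[OF fin, of g]
      supp_add[of f g]
    by (simp add: fa_add_def distrib_right sum.distrib)
qed

lemma rho_sub:
  assumes "f \<in> fa_carrier" "g \<in> fa_carrier"
  shows "rho (fa_sub f g) v = (\<lambda>i. rho f v i - rho g v i)"
proof -
  have fin: "finite (supp f \<union> supp g)" using assms by (simp add: carrier_iff)
  show ?thesis
    using rho_superset[OF fin, of "fa_sub f g"] rho_superset[OF fin, of f] rho_superset[OF fin, of g]
      supp_sub[of f g]
    by (simp add: fa_sub_def left_diff_distrib sum_subtractf)
qed

lemma rho_smult:
  assumes "f \<in> fa_carrier"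
  shows "rho (fa_smult c f) v = (\<lambda>i. c * rho f v i)"
proof -
  have fin: "finite (supp f)" using assms by (simp add: carrier_iff)
  show ?thesis
    using rho_superset[OF fin, of "fa_smult c f"] supp_smult[of c f]
    by (simp add: rho_def fa_smult_def sum_distrib_left mult.assoc)
qed

lemma rho_zero: "rho fa_zero v = (\<lambda>i. 0)"
  by (simp add: rho_def supp_def fa_zero_def)

lemma rho_one: "rho fa_one v = v"
  using rho_superset[of "{[]}" fa_one v] by (auto simp: supp_def fa_one_def)

lemma rho_var: "rho (fa_var a) v = rgen a v"
  using rho_superset[of "{[a]}" "fa_var a" v] by (auto simp: supp_def fa_var_def)

lemma rho_var_mult:
  assumes h: "h \<in> fa_carrier"
  shows "rho (fa_mult (fa_var a) h) v = rgen a (rho h v)"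
proof -
  have fin: "finite (Cons a ` supp h)" using h by (simp add: carrier_iff)
  have sub: "supp (fa_mult (fa_var a) h) \<subseteq> Cons a ` supp h"
    apply (clarsimp simp: supp_def) subgoal for w by (cases w) (auto simp: mult_var_left split: if_splits) done
  have "rho (fa_mult (fa_var a) h) v = (\<lambda>i. \<Sum>w\<in>Cons a ` supp h. fa_mult (fa_var a) h w * rword w v i)"
    by (rule rho_superset[OF fin sub])
  also have "\<dots> = (\<lambda>i. \<Sum>u\<in>supp h. h u * rgen a (rword u v) i)"
    by (subst sum.reindex) (auto simp: mult_var_left)
  also have "\<dots> = rgen a (rho h v)"
    unfolding rho_def using lin_sum[OF lin_rgen[of a], of "supp h" h "\<lambda>u. rword u v"] h
    by (simp add: carrier_iff)
  finally show ?thesis .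
qed

lemma rho_delta_mult:
  assumes h: "h \<in> fa_carrier"
  shows "rho (fa_mult (delta w) h) v = rword w (rho h v)"
proof (induction w)
  case Nil then show ?case by (simp add: delta_Nil mult_one_left)
next
  case (Cons a w)
  have "fa_mult (delta (a # w)) h = fa_mult (fa_var a) (fa_mult (delta w) h)"
    by (simp add: delta_Cons var_assoc)
  then show ?case
    using rho_var_mult[OF carrier_mult[OF carrier_delta h]] Cons by simp
qed

lemma fa_sum_insert: "x \<notin> S \<Longrightarrow> finite S \<Longrightarrow> fa_sum F (insert x S) = fa_add (F x) (fa_sum F S)"
  by (rule ext) (simp add: fa_sum_def fa_add_def)
lemma fa_sum_empty: "fa_sum F {} = fa_zero"
  by (rule ext) (simp add: fa_sum_def fa_zero_def)

lemma carrier_sum: "finite S \<Longrightarrow> (\<And>s. s \<in> S \<Longrightarrow> F s \<in> fa_carrier) \<Longrightarrow> fa_sum F S \<in> fa_carrier"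
  by (induction S rule: finite_induct) (auto simp: fa_sum_insert fa_sum_empty carrier_zero carrier_add)

lemma rho_sum:
  "finite S \<Longrightarrow> (\<And>s. s \<in> S \<Longrightarrow> F s \<in> fa_carrier) \<Longrightarrow> rho (fa_sum F S) v = (\<lambda>i. \<Sum>s\<in>S. rho (F s) v i)"
proof (induction S rule: finite_induct)
  case empty then show ?case by (simp add: fa_sum_empty rho_zero)
next
  case (insert x S)
  then show ?case by (simp add: fa_sum_insert rho_add carrier_sum)
qed

lemma rho_mult:
  assumes f: "f \<in> fa_carrier" and h: "h \<in> fa_carrier"
  shows "rho (fa_mult f h) v = rho f (rho h v)"
proof -
  have fin: "finite (supp f)" using f by (simp add: carrier_iff)
  have "fa_mult f h = fa_sum (\<lambda>w. fa_smult (f w) (fa_mult (delta w) h)) (supp f)"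
    by (subst decomp[OF f]) (simp add: mult_sum_left mult_smult_left)
  then have "rho (fa_mult f h) v = (\<lambda>i. \<Sum>w\<in>supp f. rho (fa_smult (f w) (fa_mult (delta w) h)) v i)"
    by (simp add: rho_sum[OF fin] carrier_smult carrier_mult carrier_delta h)
  also have "\<dots> = (\<lambda>i. \<Sum>w\<in>supp f. f w * rword w (rho h v) i)"
    by (simp add: rho_smult carrier_mult carrier_delta h rho_delta_mult)
  finally show ?thesis by (simp add: rho_def)
qed

lemma rho_vzero: "rho f (\<lambda>i. 0) = (\<lambda>i. 0)"
  by (simp add: rho_def lin_zero[OF lin_rword])

lemma ideal_carrier: "r \<in> DL2_ideal \<Longrightarrow> r \<in> fa_carrier"
proof (induction rule: DL2_ideal.induct)
  case (rel r) then show ?case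
    by (auto simp: DL2_relations_def intro!: carrier_mult carrier_add carrier_sub carrier_var carrier_one)
qed (auto intro: carrier_zero carrier_add carrier_mult)

lemma rel_cases: "r \<in> (DL2_relations::'k::field falg set) \<Longrightarrow> rho r v = (\<lambda>i. 0)"
  unfolding DL2_relations_def
  apply (simp only: insert_iff empty_iff)
  apply (elim disjE)
  apply (simp_all add: rho_mult rho_add rho_sub rho_var rho_one carrier_var carrier_one carrier_mult carrier_sub carrier_add)
  apply (simp_all add: fun_eq_iff split: prod.splits)
  apply (simp_all add: sg_def)
  done

lemma rho_ideal: "r \<in> DL2_ideal \<Longrightarrow> rho r v = (\<lambda>i. 0)"
proof (induction arbitrary: v rule: DL2_ideal.induct)
  case (rel r) then show ?case by (rule rel_cases)
next
  case zero then show ?case by (simp add: rho_zero)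
next
  case (add a b) then show ?case by (simp add: rho_add ideal_carrier)
next
  case (mult a p q) then show ?case
    by (simp add: rho_mult ideal_carrier carrier_mult rho_vzero)
qed

typedef (overloaded) 'k F = "fa_carrier :: ('k::field) falg set" morphisms RF AF
  using carrier_zero by blast

setup_lifting type_definition_F

instantiation F :: (field) ring_1
begin
lift_definition zero_F :: "'k::field F" is fa_zero by (rule carrier_zero)
lift_definition one_F :: "'k::field F" is fa_one by (rule carrier_one)
lift_definition plus_F :: "'k::field F \<Rightarrow> 'k F \<Rightarrow> 'k F" is fa_add by (rule carrier_add)
lift_definition minus_F :: "'k::field F \<Rightarrow> 'k F \<Rightarrow> 'k F" is fa_sub by (rule carrier_sub)
lift_definition uminus_F :: "'k::field F \<Rightarrow> 'k F" is "fa_smult (-1)" by (rule carrier_smult)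
lift_definition times_F :: "'k::field F \<Rightarrow> 'k F \<Rightarrow> 'k F" is fa_mult by (rule carrier_mult)
instance
proof
  fix a b c :: "'a F"
  show "a * b * c = a * (b * c)" by transfer (simp add: fa_assoc)
  show "(a + b) * c = a * c + b * c" by transfer (simp add: mult_add_left)
  show "a * (b + c) = a * b + a * c" by transfer (simp add: mult_add_right)
  show "1 * a = a" by transfer (simp add: mult_one_left)
  show "a * 1 = a" by transfer (simp add: mult_one_right)
  show "a + b + c = a + (b + c)" by transfer (simp add: fa_add_def add.assoc)
  show "a + b = b + a" by transfer (simp add: fa_add_def add.commute)
  show "0 + a = a" by transfer (simp add: fa_add_def fa_zero_def)
  show "- a + a = 0" by transfer (simp add: fa_add_def fa_zero_def fa_smult_def)
  show "a - b = a + - b" by transfer (simp add: fa_add_def fa_sub_def fa_smult_def)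
  show "(0::'a F) \<noteq> 1" by transfer (simp add: fa_zero_def fa_one_def fun_eq_iff)
qed
end

lift_definition sF :: "'k::field \<Rightarrow> 'k F \<Rightarrow> 'k F" is fa_smult by (rule carrier_smult)
lift_definition vF :: "gen \<Rightarrow> 'k::field F" is fa_var by (rule carrier_var)

definition rel_D :: "'k::field F \<Rightarrow> 'k F \<Rightarrow> bool" where
  "rel_D a b \<longleftrightarrow> RF (a - b) \<in> DL2_ideal"

lemma I_zero: "RF (0::'k::field F) \<in> DL2_ideal"
  by (simp add: zero_F.rep_eq DL2_ideal.zero)
lemma I_add: "RF a \<in> DL2_ideal \<Longrightarrow> RF b \<in> DL2_ideal \<Longrightarrow> RF (a + b) \<in> DL2_ideal"
  by (simp add: plus_F.rep_eq DL2_ideal.add)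
lemma I_mult: "RF a \<in> DL2_ideal \<Longrightarrow> RF (p * a * q) \<in> DL2_ideal"
  by (simp add: times_F.rep_eq DL2_ideal.mult RF)
lemma I_lmult: "RF a \<in> DL2_ideal \<Longrightarrow> RF (p * a) \<in> DL2_ideal"
  using I_mult[of a p 1] by simp
lemma I_rmult: "RF a \<in> DL2_ideal \<Longrightarrow> RF (a * q) \<in> DL2_ideal"
  using I_mult[of a 1 q] by simp
lemma I_neg: "RF a \<in> DL2_ideal \<Longrightarrow> RF (- a) \<in> DL2_ideal"
  using I_lmult[of a "-1"] by simp

lemma rel_D_eq: "a = b \<Longrightarrow> rel_D a b"
  by (simp add: rel_D_def I_zero)

lemma equivp_rel_D: "equivp (rel_D :: 'k::field F \<Rightarrow> _)"
proof (rule equivpI)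
  show "reflp rel_D" by (simp add: reflp_def rel_D_eq)
  show "symp (rel_D :: 'k::field F \<Rightarrow> _)"
  proof (rule sympI)
    fix x y :: "'k F" assume "rel_D x y"
    from I_neg[OF this[unfolded rel_D_def]] show "rel_D y x" by (simp add: rel_D_def)
  qed
  show "transp (rel_D :: 'k::field F \<Rightarrow> _)"
  proof (rule transpI)
    fix x y z :: "'k F" assume "rel_D x y" "rel_D y z"
    from I_add[OF this[unfolded rel_D_def]] show "rel_D x z" by (simp add: rel_D_def)
  qed
qed

quotient_type (overloaded) 'k D = "'k::field F" / rel_D
  by (rule equivp_rel_D)

lemma rho_RF_zero_not: "RF (1::'k::field F) \<notin> DL2_ideal"
proof
  assume "RF (1::'k F) \<in> DL2_ideal"
  then have "rho (RF (1::'k F)) (\<lambda>i. 1) = (\<lambda>i. 0)" by (rule rho_ideal)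
  then show False by (simp add: one_F.rep_eq rho_one fun_eq_iff)
qed

instantiation D :: (field) ring_1
begin
lift_definition zero_D :: "'k::field D" is "0::'k F" .
lift_definition one_D :: "'k::field D" is "1::'k F" .
lift_definition plus_D :: "'k::field D \<Rightarrow> 'k D \<Rightarrow> 'k D" is "(+)"
proof -
  fix a a' b b' :: "'k F"
  assume "rel_D a a'" "rel_D b b'"
  from I_add[OF this[unfolded rel_D_def]] show "rel_D (a + b) (a' + b')"
    unfolding rel_D_def by (simp add: algebra_simps)
qed
lift_definition minus_D :: "'k::field D \<Rightarrow> 'k D \<Rightarrow> 'k D" is "(-)"
proof -
  fix a a' b b' :: "'k F"
  assume "rel_D a a'" "rel_D b b'"
  from I_add[OF this(1)[unfolded rel_D_def] I_neg[OF this(2)[unfolded rel_D_def]]] show "rel_D (a - b) (a' - b')"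
    unfolding rel_D_def by (simp add: algebra_simps)
qed
lift_definition uminus_D :: "'k::field D \<Rightarrow> 'k D" is "uminus"
proof -
  fix a a' :: "'k F"
  assume "rel_D a a'"
  from I_neg[OF this[unfolded rel_D_def]] show "rel_D (- a) (- a')"
    unfolding rel_D_def by (simp add: algebra_simps)
qed
lift_definition times_D :: "'k::field D \<Rightarrow> 'k D \<Rightarrow> 'k D" is "(*)"
proof -
  fix a a' b b' :: "'k F"
  assume "rel_D a a'" "rel_D b b'"
  then have "RF ((a - a') * b + a' * (b - b')) \<in> DL2_ideal"
    unfolding rel_D_def by (intro I_add I_rmult I_lmult)
  then show "rel_D (a * b) (a' * b')"
    unfolding rel_D_def by (simp add: algebra_simps)
qed
instance
proof
  fix a b c :: "'a D"
  show "a * b * c = a * (b * c)" by transfer (rule rel_D_eq, simp add: algebra_simps)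
  show "(a + b) * c = a * c + b * c" by transfer (rule rel_D_eq, simp add: algebra_simps)
  show "a * (b + c) = a * b + a * c" by transfer (rule rel_D_eq, simp add: algebra_simps)
  show "1 * a = a" by transfer (rule rel_D_eq, simp)
  show "a * 1 = a" by transfer (rule rel_D_eq, simp)
  show "a + b + c = a + (b + c)" by transfer (rule rel_D_eq, simp add: algebra_simps)
  show "a + b = b + a" by transfer (rule rel_D_eq, simp add: algebra_simps)
  show "0 + a = a" by transfer (rule rel_D_eq, simp)
  show "- a + a = 0" by transfer (rule rel_D_eq, simp)
  show "a - b = a + - b" by transfer (rule rel_D_eq, simp)
  show "(0::'a D) \<noteq> 1" apply transfer unfolding rel_D_def
    using rho_RF_zero_not I_neg by fastforce
qed
end

definition pj :: "'k::field falg \<Rightarrow> 'k D" where "pj f = abs_D (AF f)"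

lemma AF_add: "f \<in> fa_carrier \<Longrightarrow> g \<in> fa_carrier \<Longrightarrow> AF (fa_add f g) = AF f + AF g"
  by (metis AF_inverse RF_inverse plus_F.rep_eq)
lemma AF_sub: "f \<in> fa_carrier \<Longrightarrow> g \<in> fa_carrier \<Longrightarrow> AF (fa_sub f g) = AF f - AF g"
  by (metis AF_inverse RF_inverse minus_F.rep_eq)
lemma AF_mult: "f \<in> fa_carrier \<Longrightarrow> g \<in> fa_carrier \<Longrightarrow> AF (fa_mult f g) = AF f * AF g"
  by (metis AF_inverse RF_inverse times_F.rep_eq)
lemma AF_one: "AF fa_one = 1"
  by (metis RF_inverse one_F.rep_eq)
lemma AF_zero: "AF fa_zero = 0"
  by (metis RF_inverse zero_F.rep_eq)

lemma pj_add: "f \<in> fa_carrier \<Longrightarrow> g \<in> fa_carrier \<Longrightarrow> pj (fa_add f g) = pj f + pj g"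
  by (simp add: pj_def AF_add plus_D.abs_eq[symmetric] equivp_reflp[OF equivp_rel_D])
lemma pj_sub: "f \<in> fa_carrier \<Longrightarrow> g \<in> fa_carrier \<Longrightarrow> pj (fa_sub f g) = pj f - pj g"
  by (simp add: pj_def AF_sub minus_D.abs_eq[symmetric] equivp_reflp[OF equivp_rel_D])
lemma pj_mult: "f \<in> fa_carrier \<Longrightarrow> g \<in> fa_carrier \<Longrightarrow> pj (fa_mult f g) = pj f * pj g"
  by (simp add: pj_def AF_mult times_D.abs_eq[symmetric] equivp_reflp[OF equivp_rel_D])
lemma pj_one: "pj fa_one = 1"
  by (simp add: pj_def AF_one one_D_def)
lemma pj_zero: "pj fa_zero = 0"
  by (simp add: pj_def AF_zero zero_D_def)

lemma pj_eq_iff: "f \<in> fa_carrier \<Longrightarrow> g \<in> fa_carrier \<Longrightarrow> pj f = pj g \<longleftrightarrow> fa_sub f g \<in> DL2_ideal"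
  unfolding pj_def
  by (simp add: D.abs_eq_iff rel_D_def minus_F.rep_eq AF_inverse)

lemma pj_surj: "\<exists>f\<in>fa_carrier. a = pj f"
proof -
  have "a = abs_D (rep_D a)" by (simp add: Quotient_abs_rep[OF Quotient_D])
  then show ?thesis unfolding pj_def by (metis RF RF_inverse)
qed

lift_definition rhoD :: "'k::field D \<Rightarrow> 'k vec \<Rightarrow> 'k vec" is "\<lambda>a. rho (RF a)"
proof -
  fix a b :: "'k F" assume "rel_D a b"
  then have "rho (RF (a - b)) v = (\<lambda>i. 0)" for v by (simp add: rel_D_def rho_ideal)
  then have "(\<lambda>i. rho (RF a) v i - rho (RF b) v i) = (\<lambda>i. 0)" for v
    by (simp add: minus_F.rep_eq rho_sub RF)
  then show "rho (RF a) = rho (RF b)" by (auto simp: fun_eq_iff)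
qed

lemma rhoD_pi: "f \<in> fa_carrier \<Longrightarrow> rhoD (pj f) = rho f"
  by (simp add: pj_def rhoD.abs_eq AF_inverse)

lemma rhoD_mult: "rhoD (a * b) v = rhoD a (rhoD b v)"
proof -
  obtain f g where "f \<in> fa_carrier" "g \<in> fa_carrier" "a = pj f" "b = pj g" using pj_surj by metis
  then show ?thesis by (simp add: pj_mult[symmetric] rhoD_pi carrier_mult rho_mult)
qed
lemma rhoD_add: "rhoD (a + b) v = (\<lambda>i. rhoD a v i + rhoD b v i)"
proof -
  obtain f g where "f \<in> fa_carrier" "g \<in> fa_carrier" "a = pj f" "b = pj g" using pj_surj by metis
  then show ?thesis by (simp add: pj_add[symmetric] rhoD_pi carrier_add rho_add)
qed
lemma rhoD_diff: "rhoD (a - b) v = (\<lambda>i. rhoD a v i - rhoD b v i)"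
proof -
  obtain f g where "f \<in> fa_carrier" "g \<in> fa_carrier" "a = pj f" "b = pj g" using pj_surj by metis
  then show ?thesis by (simp add: pj_sub[symmetric] rhoD_pi carrier_sub rho_sub)
qed
lemma rhoD_one: "rhoD 1 v = v"
  by (simp add: pj_one[symmetric] rhoD_pi carrier_one rho_one)
lemma rhoD_zero: "rhoD 0 v = (\<lambda>i. 0)"
  by (simp add: pj_zero[symmetric] rhoD_pi carrier_zero rho_zero)

definition kc :: "'k::field \<Rightarrow> 'k D" where "kc c = pj (fa_smult c fa_one)"

lemma smult_as_mult: "fa_smult c f = fa_mult (fa_smult c fa_one) f"
  by (simp add: mult_smult_left mult_one_left)
lemma smult_as_mult2: "fa_smult c f = fa_mult f (fa_smult c fa_one)"
  by (simp add: mult_smult_right mult_one_right)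

lemma pj_smult: "f \<in> fa_carrier \<Longrightarrow> pj (fa_smult c f) = kc c * pj f"
  unfolding kc_def by (subst smult_as_mult) (simp add: pj_mult carrier_smult carrier_one)

lemma kc_central: "kc c * a = a * kc c"
proof -
  obtain f where f: "f \<in> fa_carrier" "a = pj f" using pj_surj by metis
  have "kc c * pj f = pj f * kc c"
    unfolding kc_def using f
    by (simp add: pj_mult[symmetric] carrier_smult carrier_one smult_as_mult[symmetric] smult_as_mult2[symmetric])
  then show ?thesis using f by simp
qed

lemma kc_add: "kc (c + d) = kc c + kc d"
proof -
  have "fa_smult (c + d) fa_one = fa_add (fa_smult c fa_one) (fa_smult d fa_one)"
    by (rule ext) (simp add: fa_smult_def fa_add_def distrib_right)
  then show ?thesis unfolding kc_def by (simp add: pj_add carrier_smult carrier_one)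
qed
lemma kc_mult: "kc (c * d) = kc c * kc d"
proof -
  have "fa_smult (c * d) fa_one = fa_mult (fa_smult c fa_one) (fa_smult d fa_one)"
    by (simp add: mult_smult_left mult_smult_right mult_one_left) (simp add: fa_smult_def mult_ac)
  then show ?thesis unfolding kc_def by (simp add: pj_mult carrier_smult carrier_one)
qed
lemma kc_one: "kc 1 = (1::'k::field D)"
proof -
  have "fa_smult 1 fa_one = (fa_one :: 'k falg)" by (simp add: fa_smult_def)
  then show ?thesis unfolding kc_def by (simp add: pj_one)
qed
lemma kc_zero: "kc 0 = 0"
  using kc_add[of 0 0] by simp
lemma kc_minus: "kc (- c) = - kc c"
proof -
  have "kc c + kc (- c) = kc (c + - c)" by (simp only: kc_add)
  also have "\<dots> = 0" by (simp add: kc_zero)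
  finally have "kc c + kc (- c) = 0" .
  then show ?thesis by (metis add.commute eq_neg_iff_add_eq_0)
qed
lemma kc_diff: "kc (c - d) = kc c - kc d"
  using kc_add[of c "- d"] kc_minus[of d] by simp

lemma rhoD_kc: "rhoD (kc c) v = (\<lambda>i. c * v i)"
  unfolding kc_def by (simp add: rhoD_pi carrier_smult carrier_one rho_smult rho_one)

definition gx :: "'k::field D" where "gx = pj (fa_var Gx)"
definition gX :: "'k::field D" where "gX = pj (fa_var GX)"
definition gg :: "'k::field D" where "gg = pj (fa_var Gg)"
definition gG :: "'k::field D" where "gG = pj (fa_var GG)"

lemma rhoD_gen: "rhoD gx v = rgen Gx v" "rhoD gX v = rgen GX v" "rhoD gg v = rgen Gg v" "rhoD gG v = rgen GG v"
  by (simp_all add: gx_def gX_def gg_def gG_def rhoD_pi carrier_var rho_var)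

lemma pj_rel: "r \<in> DL2_relations \<Longrightarrow> pj r = 0"
proof -
  assume r: "r \<in> DL2_relations"
  then have "r \<in> DL2_ideal" by (rule DL2_ideal.rel)
  moreover have "fa_sub r fa_zero = r" by (simp add: fa_sub_def fa_zero_def)
  ultimately show ?thesis using pj_eq_iff[of r fa_zero] ideal_carrier carrier_zero pj_zero by metis
qed

lemma D_rels:
  "gx * gx = (0::'k::field D)" "gX * gX = (0::'k D)" "gg * gg = (1::'k D)" "gG * gG = (1::'k D)"
  "gg * gG = (gG * gg :: 'k D)" "gg * gx = - (gx * gg :: 'k D)" "gg * gX = - (gX * gg :: 'k D)"
  "gG * gx = - (gx * gG :: 'k D)" "gG * gX = - (gX * gG :: 'k D)"
  "gx * gX + gX * gx = (1 - gg * gG :: 'k D)"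
proof -
  note cs = carrier_var carrier_one carrier_mult carrier_add carrier_sub
  have R: "\<And>r. r \<in> (DL2_relations :: 'k falg set) \<Longrightarrow> pj r = 0" by (rule pj_rel)
  show "gx * gx = (0::'k::field D)" using R[of "fa_mult vx vx"]
    by (simp add: DL2_relations_def pj_mult cs gx_def)
  show "gX * gX = (0::'k D)" using R[of "fa_mult vX vX"]
    by (simp add: DL2_relations_def pj_mult cs gX_def)
  show "gg * gg = (1::'k D)" using R[of "fa_sub (fa_mult vg vg) fa_one"]
    by (simp add: DL2_relations_def pj_mult pj_sub pj_one cs gg_def)
  show "gG * gG = (1::'k D)" using R[of "fa_sub (fa_mult vG vG) fa_one"]
    by (simp add: DL2_relations_def pj_mult pj_sub pj_one cs gG_def)
  show "gg * gG = (gG * gg :: 'k D)" using R[of "fa_sub (fa_mult vg vG) (fa_mult vG vg)"]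
    by (simp add: DL2_relations_def pj_mult pj_sub cs gG_def gg_def)
  show "gg * gx = - (gx * gg :: 'k D)" using R[of "fa_add (fa_mult vg vx) (fa_mult vx vg)"]
    by (simp add: DL2_relations_def pj_mult pj_add cs gx_def gg_def eq_neg_iff_add_eq_0)
  show "gg * gX = - (gX * gg :: 'k D)" using R[of "fa_add (fa_mult vg vX) (fa_mult vX vg)"]
    by (simp add: DL2_relations_def pj_mult pj_add cs gX_def gg_def eq_neg_iff_add_eq_0)
  show "gG * gx = - (gx * gG :: 'k D)" using R[of "fa_add (fa_mult vG vx) (fa_mult vx vG)"]
    by (simp add: DL2_relations_def pj_mult pj_add cs gx_def gG_def eq_neg_iff_add_eq_0)
  show "gG * gX = - (gX * gG :: 'k D)" using R[of "fa_add (fa_mult vG vX) (fa_mult vX vG)"]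
    by (simp add: DL2_relations_def pj_mult pj_add cs gX_def gG_def eq_neg_iff_add_eq_0)
  show "gx * gX + gX * gx = (1 - gg * gG :: 'k D)"
    using R[of "fa_sub (fa_add (fa_mult vx vX) (fa_mult vX vx)) (fa_sub fa_one (fa_mult vg vG))"]
    by (simp add: DL2_relations_def pj_mult pj_add pj_sub pj_one cs gx_def gX_def gg_def gG_def)
qed

lemma H_carrier: "h \<in> H_sub \<alpha> \<beta> \<Longrightarrow> h \<in> fa_carrier"
  by (induction rule: H_sub.induct)
     (auto intro: carrier_one carrier_var carrier_add carrier_smult carrier_mult)

definition HD :: "'k::field \<Rightarrow> 'k \<Rightarrow> 'k D set" where "HD \<alpha> \<beta> = pj ` H_sub \<alpha> \<beta>"

lemma HD_one: "1 \<in> HD \<alpha> \<beta>"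
  unfolding HD_def using H_sub.one pj_one by (metis image_eqI)
lemma HD_g: "gg \<in> HD \<alpha> \<beta>"
  unfolding HD_def gg_def using H_sub.gen_g by blast
lemma HD_G: "gG \<in> HD \<alpha> \<beta>"
  unfolding HD_def gG_def using H_sub.gen_G by blast
lemma HD_y: "kc \<alpha> * gx + kc \<beta> * gX \<in> HD \<alpha> \<beta>"
proof -
  have "pj (fa_add (fa_smult \<alpha> vx) (fa_smult \<beta> vX)) = kc \<alpha> * gx + kc \<beta> * gX"
    by (simp add: pj_add pj_smult carrier_smult carrier_var gx_def gX_def)
  then show ?thesis unfolding HD_def using H_sub.gen_y by (metis image_eqI)
qed
lemma HD_add: "a \<in> HD \<alpha> \<beta> \<Longrightarrow> b \<in> HD \<alpha> \<beta> \<Longrightarrow> a + b \<in> HD \<alpha> \<beta>"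
  unfolding HD_def using H_sub.add pj_add H_carrier by (smt (verit) image_iff)
lemma HD_mult: "a \<in> HD \<alpha> \<beta> \<Longrightarrow> b \<in> HD \<alpha> \<beta> \<Longrightarrow> a * b \<in> HD \<alpha> \<beta>"
  unfolding HD_def using H_sub.mult pj_mult H_carrier by (smt (verit) image_iff)
lemma HD_kc: "a \<in> HD \<alpha> \<beta> \<Longrightarrow> kc c * a \<in> HD \<alpha> \<beta>"
  unfolding HD_def using H_sub.smult pj_smult H_carrier by (smt (verit) image_iff)
lemma HD_neg: "a \<in> HD \<alpha> \<beta> \<Longrightarrow> - a \<in> HD \<alpha> \<beta>"
  using HD_kc[of a \<alpha> \<beta> "-1"] by (simp add: kc_minus kc_one)
lemma HD_zero: "0 \<in> HD \<alpha> \<beta>"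
  using HD_kc[OF HD_one[of \<alpha> \<beta>], of 0] by (simp add: kc_zero)
lemma HD_diff: "a \<in> HD \<alpha> \<beta> \<Longrightarrow> b \<in> HD \<alpha> \<beta> \<Longrightarrow> a - b \<in> HD \<alpha> \<beta>"
  using HD_add[OF _ HD_neg] by (metis diff_conv_add_uminus)

lemma kc_left_comm: "a * (kc c * b) = kc c * (a * b)"
  by (metis kc_central mult.assoc)
lemma kc_kc: "kc c * (kc d * b) = kc (c * d) * b"
  by (simp add: kc_mult mult.assoc)

definition SPn :: "'k::field D set \<Rightarrow> 'k D \<Rightarrow> 'k D set" where
  "SPn S z = {a + b * z | a b. a \<in> S \<and> b \<in> S}"

lemma span_step:
  fixes z W y :: "'k::field D" and S :: "'k D set"
  assumes zz: "z*z = 0" and WW: "W*W = 0" and zW: "z*W + W*z = 1 - gg*gG"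
   and gz: "gg*z = -(z*gg)" "gG*z = -(z*gG)"
   and yd: "y = kc p * z + kc q * W" and q: "q \<noteq> 0"
   and S1: "1 \<in> S" "y \<in> S"
   and Sadd: "\<And>a b. a\<in>S \<Longrightarrow> b\<in>S \<Longrightarrow> a+b \<in> S"
   and Smult: "\<And>a b. a\<in>S \<Longrightarrow> b\<in>S \<Longrightarrow> a*b \<in> S"
   and Skc: "\<And>a c. a\<in>S \<Longrightarrow> kc c * a \<in> S"
   and t: "t \<in> SPn S z" and e: "e \<in> {gg, gG, z, W}" and eS: "gg \<in> S" "gG \<in> S"
  shows "t * e \<in> SPn S z"
proof -
  obtain a b where ab: "a \<in> S" "b \<in> S" "t = a + b * z" using t unfolding SPn_def by blast
  have Sneg: "\<And>a. a \<in> S \<Longrightarrow> - a \<in> S" using Skc[of _ "-1"] by (simp add: kc_minus kc_one)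
  have S0: "0 \<in> S" using Skc[OF S1(1), of 0] by (simp add: kc_zero)
  have Sdiff: "\<And>a b. a\<in>S \<Longrightarrow> b\<in>S \<Longrightarrow> a-b \<in> S" using Sadd Sneg by (metis diff_conv_add_uminus)
  have zg: "z*gg = -(gg*z)" "z*gG = -(gG*z)" using gz by simp_all
  consider "e = gg" | "e = gG" | "e = z" | "e = W" using e by blast
  then show ?thesis
  proof cases
    case 1
    have "t * e = a*gg + (-(b*gg)) * z" using ab 1 by (simp add: algebra_simps zg)
    then show ?thesis unfolding SPn_def using ab eS Smult Sneg by blast
  next
    case 2
    have "t * e = a*gG + (-(b*gG)) * z" using ab 2 by (simp add: algebra_simps zg)
    then show ?thesis unfolding SPn_def using ab eS Smult Sneg by blast
  next
    case 3
    have "t * e = 0 + a * z" using ab 3 by (simp add: algebra_simps zz)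
    then show ?thesis unfolding SPn_def using ab S0 by blast
  next
    case 4
    have "kc (1/q) * y = kc (1/q) * (kc p * z) + kc (1/q) * (kc q * W)"
      by (simp add: yd distrib_left)
    also have "\<dots> = kc (p/q) * z + W"
      using q by (simp only: kc_kc) (simp add: kc_one)
    finally have W: "W = kc (1/q) * y - kc (p/q) * z" by (simp add: algebra_simps)
    have "W*z = kc (1/q) * (y*z) - kc (p/q) * (z*z)"
      by (subst W) (simp add: algebra_simps)
    then have Wz: "W*z = kc (1/q) * (y*z)" by (simp add: zz)
    have zW': "z*W = 1 - gg*gG - kc (1/q) * (y*z)"
      using zW Wz by (simp add: eq_diff_eq)
    have "t * e = a*W + b*(z*W)" using ab 4 by (simp add: algebra_simps)
    also have "\<dots> = a*(kc (1/q) * y - kc (p/q) * z) + b*(1 - gg*gG - kc (1/q) * (y*z))"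
      by (subst W, subst zW') simp
    also have "\<dots> = (kc (1/q) * (a*y) + b - b*(gg*gG)) + (kc (-(p/q)) * a + kc (-(1/q)) * (b*y)) * z"
    proof -
      have 1: "a*(kc (1/q) * y - kc (p/q) * z) = kc (1/q) * (a*y) - kc (p/q) * (a*z)"
        by (simp only: right_diff_distrib kc_left_comm)
      have 2: "b*(1 - gg*gG - kc (1/q) * (y*z)) = b - b*(gg*gG) - kc (1/q) * (b*(y*z))"
        by (simp only: right_diff_distrib kc_left_comm mult_1_right)
      have 3: "(kc (-(p/q)) * a + kc (-(1/q)) * (b*y)) * z = - (kc (p/q) * (a*z)) - kc (1/q) * (b*(y*z))"
        by (simp only: distrib_right kc_minus mult.assoc mult_minus_left diff_conv_add_uminus)
      show ?thesis unfolding 1 2 3 by (simp add: algebra_simps)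
    qed
    finally have eq: "t * e = (kc (1/q) * (a*y) + b - b*(gg*gG)) + (kc (-(p/q)) * a + kc (-(1/q)) * (b*y)) * z" .
    have A: "kc (1/q) * (a*y) + b - b*(gg*gG) \<in> S"
      by (intro Sdiff Sadd Skc Smult ab S1 eS)
    have B: "kc (-(p/q)) * a + kc (-(1/q)) * (b*y) \<in> S"
      by (intro Sadd Skc Smult ab S1)
    show ?thesis unfolding SPn_def using eq A B by blast
  qed
qed

fun gD :: "gen \<Rightarrow> 'k::field D" where
  "gD Gx = gx" | "gD GX = gX" | "gD Gg = gg" | "gD GG = gG"

lemma pj_var: "pj (fa_var a) = gD a"
  by (cases a) (simp_all add: gx_def gX_def gg_def gG_def)

lemma pj_delta: "pj (delta w) = prod_list (map gD w)"
proof (induction w)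
  case Nil then show ?case by (simp add: delta_Nil pj_one)
next
  case (Cons a w) then show ?case
    by (simp add: delta_Cons pj_mult carrier_var carrier_delta pj_var)
qed

lemma pj_sum: "finite S \<Longrightarrow> (\<And>s. s \<in> S \<Longrightarrow> F s \<in> fa_carrier) \<Longrightarrow> pj (fa_sum F S) = (\<Sum>s\<in>S. pj (F s))"
proof (induction S rule: finite_induct)
  case empty then show ?case by (simp add: fa_sum_empty pj_zero)
next
  case (insert x S) then show ?case by (simp add: fa_sum_insert pj_add carrier_sum)
qed

lemma span_all:
  fixes SP :: "'k::field D set"
  assumes step: "\<And>t a. t \<in> SP \<Longrightarrow> t * gD a \<in> SP"
    and one: "1 \<in> SP" and zero: "0 \<in> SP"
    and add: "\<And>a b. a \<in> SP \<Longrightarrow> b \<in> SP \<Longrightarrow> a + b \<in> SP"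
    and kcm: "\<And>a c. a \<in> SP \<Longrightarrow> kc c * a \<in> SP"
    and f: "f \<in> fa_carrier"
  shows "pj f \<in> SP"
proof -
  have W: "prod_list (map gD w) \<in> SP" for w
  proof (induction w rule: rev_induct)
    case Nil then show ?case using one by simp
  next
    case (snoc a w) then show ?case using step by simp
  qed
  have fin: "finite (supp f)" using f by (simp add: carrier_iff)
  have "pj f = (\<Sum>w\<in>supp f. kc (f w) * prod_list (map gD w))"
    by (subst decomp[OF f]) (simp add: pj_sum fin carrier_smult carrier_delta pj_smult pj_delta)
  also have "\<dots> \<in> SP"
    using fin by (induction rule: finite_induct) (simp_all add: zero add kcm W)
  finally show ?thesis .
qed

lemma SPn_closed:
  assumes "1 \<in> S" "0 \<in> S" "\<And>a b. a\<in>S \<Longrightarrow> b\<in>S \<Longrightarrow> a+b \<in> S" "\<And>a c. a\<in>S \<Longrightarrow> kc c * a \<in> S"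
  shows "1 \<in> SPn S z" "0 \<in> SPn S z" "\<And>a b. a \<in> SPn S z \<Longrightarrow> b \<in> SPn S z \<Longrightarrow> a + b \<in> SPn S z"
    "\<And>a c. a \<in> SPn S z \<Longrightarrow> kc c * a \<in> SPn S z"
proof -
  show "1 \<in> SPn S z" unfolding SPn_def using assms(1,2) by (metis (mono_tags, lifting) add_0_right mem_Collect_eq mult_zero_left)
  show "0 \<in> SPn S z" unfolding SPn_def using assms(1,2) by (metis (mono_tags, lifting) add_0_right mem_Collect_eq mult_zero_left)
  fix a b assume "a \<in> SPn S z" "b \<in> SPn S z"
  then obtain a1 a2 b1 b2 where "a1\<in>S" "a2\<in>S" "b1\<in>S" "b2\<in>S" "a = a1 + a2*z" "b = b1 + b2*z"
    unfolding SPn_def by blast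
  then show "a + b \<in> SPn S z" unfolding SPn_def using assms(3)
    by (smt (verit, best) add.assoc add.left_commute distrib_right mem_Collect_eq)
next
  fix a c assume "a \<in> SPn S z"
  then obtain a1 a2 where "a1\<in>S" "a2\<in>S" "a = a1 + a2*z"
    unfolding SPn_def by blast
  then show "kc c * a \<in> SPn S z" unfolding SPn_def using assms(4)
    by (metis (mono_tags, lifting) distrib_left mem_Collect_eq mult.assoc)
qed

lemma span_D:
  fixes \<alpha> \<beta> :: "'k::field" and z W :: "'k D"
  assumes "\<alpha> \<noteq> 0 \<or> \<beta> \<noteq> 0"
    and zdef: "z = (if \<beta> \<noteq> 0 then gx else gX)"
    and f: "f \<in> fa_carrier"
  shows "pj f \<in> SPn (HD \<alpha> \<beta>) z"
proof -
  let ?S = "HD \<alpha> \<beta>"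
  have Sc: "1 \<in> ?S" "0 \<in> ?S" "\<And>a b. a\<in>?S \<Longrightarrow> b\<in>?S \<Longrightarrow> a+b \<in> ?S" "\<And>a c. a\<in>?S \<Longrightarrow> kc c * a \<in> ?S"
    by (simp_all add: HD_one HD_zero HD_add HD_kc)
  note C = SPn_closed[OF Sc]
  have step: "t * gD a \<in> SPn ?S z" if t: "t \<in> SPn ?S z" for t a
  proof (cases "\<beta> \<noteq> 0")
    case True
    then have z: "z = gx" using zdef by simp
    show ?thesis unfolding z
      apply (rule span_step[where W = gX and y = "kc \<alpha> * gx + kc \<beta> * gX" and p = \<alpha> and q = \<beta>])
      using True t z by (cases a; simp add: D_rels HD_one HD_y HD_add HD_mult HD_kc HD_g HD_G)+
  next
    case False
    then have z: "z = gX" and a: "\<alpha> \<noteq> 0" using zdef assms(1) by simp_all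
    show ?thesis unfolding z
      apply (rule span_step[where W = gx and y = "kc \<alpha> * gx + kc \<beta> * gX" and p = \<beta> and q = \<alpha>])
      using a t z D_rels(10) by (cases a; simp add: D_rels HD_one HD_y HD_add HD_mult HD_kc HD_g HD_G add.commute)+
  qed
  show ?thesis by (rule span_all[OF step C f])
qed

definition mon :: "'k::field D \<Rightarrow> bool \<times> bool \<times> bool \<Rightarrow> 'k D" where
  "mon y t = (case t of (a,b,d) \<Rightarrow> (if a then gg else 1) * ((if b then gG else 1) * (if d then y else 1)))"

definition hspan :: "'k::field D \<Rightarrow> 'k D set" where
  "hspan y = {\<Sum>t\<in>UNIV. kc (l t) * mon y t | l. True}"

lemma hsI: "u = (\<Sum>t\<in>UNIV. kc (l t) * mon y t) \<Longrightarrow> u \<in> hspan y"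
  unfolding hspan_def by blast

lemma hs_add: "u \<in> hspan y \<Longrightarrow> v \<in> hspan y \<Longrightarrow> u + v \<in> hspan y"
proof -
  assume "u \<in> hspan y" "v \<in> hspan y"
  then obtain l l' where "u = (\<Sum>t\<in>UNIV. kc (l t) * mon y t)" "v = (\<Sum>t\<in>UNIV. kc (l' t) * mon y t)"
    unfolding hspan_def by blast
  then have "u + v = (\<Sum>t\<in>UNIV. kc (l t + l' t) * mon y t)"
    by (simp add: kc_add distrib_right sum.distrib)
  then show ?thesis by (rule hsI)
qed

lemma hs_kc: "u \<in> hspan y \<Longrightarrow> kc c * u \<in> hspan y"
proof -
  assume "u \<in> hspan y"
  then obtain l where "u = (\<Sum>t\<in>UNIV. kc (l t) * mon y t)"
    unfolding hspan_def by blast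
  then have "kc c * u = (\<Sum>t\<in>UNIV. kc (c * l t) * mon y t)"
    by (simp add: kc_mult sum_distrib_left mult.assoc)
  then show ?thesis by (rule hsI)
qed

lemma hs_zero: "0 \<in> hspan (y::'k::field D)"
proof -
  have "(0::'k::field D) = (\<Sum>t\<in>UNIV. kc 0 * mon y t)" by (simp add: kc_zero)
  then show ?thesis by (rule hsI)
qed

lemma hs_mon: "mon y s \<in> hspan y"
proof -
  have "(\<Sum>t\<in>UNIV. kc (if t = s then 1 else 0) * mon y t) = (\<Sum>t\<in>UNIV. if t = s then mon y t else 0)"
    by (rule sum.cong) (auto simp: kc_zero kc_one)
  also have "\<dots> = mon y s" by simp
  finally show ?thesis by (rule hsI[OF sym])
qed

lemma hs_neg: "u \<in> hspan y \<Longrightarrow> - u \<in> hspan y"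
  using hs_kc[of u y "-1"] by (simp add: kc_minus kc_one)
lemma hs_diff: "u \<in> hspan y \<Longrightarrow> v \<in> hspan y \<Longrightarrow> u - v \<in> hspan y"
  using hs_add[OF _ hs_neg] by (metis diff_conv_add_uminus)

lemma hs_sum: "finite S \<Longrightarrow> (\<And>s. s \<in> S \<Longrightarrow> F s \<in> hspan y) \<Longrightarrow> (\<Sum>s\<in>S. F s) \<in> hspan y"
  by (induction S rule: finite_induct) (simp_all add: hs_zero hs_add)

lemma hs_lin:
  assumes "\<And>t. e * mon y t \<in> hspan y" "u \<in> hspan y"
  shows "e * u \<in> hspan y"
proof -
  obtain l where "u = (\<Sum>t\<in>UNIV. kc (l t) * mon y t)"
    using assms(2) unfolding hspan_def by blast
  then have "e * u = (\<Sum>t\<in>UNIV. kc (l t) * (e * mon y t))"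
    by (simp add: sum_distrib_left kc_left_comm)
  also have "\<dots> \<in> hspan y" by (rule hs_sum) (simp_all add: hs_kc assms(1))
  finally show ?thesis .
qed

lemma mons:
  "1 \<in> hspan y" "y \<in> hspan y" "gG \<in> hspan y" "gG * y \<in> hspan y" "gg \<in> hspan y" "gg * y \<in> hspan y"
  "gg * gG \<in> hspan y" "gg * (gG * y) \<in> hspan y"
  using hs_mon[of y "(False,False,False)"] hs_mon[of y "(False,False,True)"]
    hs_mon[of y "(False,True,False)"] hs_mon[of y "(False,True,True)"]
    hs_mon[of y "(True,False,False)"] hs_mon[of y "(True,False,True)"]
    hs_mon[of y "(True,True,False)"] hs_mon[of y "(True,True,True)"]
  by (simp_all add: mon_def)

lemma hs_kc1: "kc c \<in> hspan y"
  using hs_kc[OF mons(1)[of y], of c] by simp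

lemma D_rels2:
  "gg * (gg * r) = r" "gG * (gG * r) = r" "gG * (gg * r) = gg * (gG * r)" "gG * gg = gg * gG"
  by (simp_all add: D_rels(3,4,5) mult.assoc[symmetric])

context
  fixes y :: "'k::field D" and c :: 'k
  assumes yg: "y * gg = - (gg * y)" and yG: "y * gG = - (gG * y)" and yy: "y * y = kc c * (1 - gg * gG)"
begin

lemma yrels: "y * (gg * r) = - (gg * (y * r))" "y * (gG * r) = - (gG * (y * r))"
  "y * (y * r) = kc c * r - kc c * (gg * (gG * r))"
  by (simp_all add: mult.assoc[symmetric] yg yG yy right_diff_distrib left_diff_distrib)

lemma hs_gg: "u \<in> hspan y \<Longrightarrow> gg * u \<in> hspan y"
  apply (rule hs_lin)
  subgoal for t by (cases t) (auto simp: mon_def D_rels(3,4) D_rels2 mons)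
  by assumption

lemma hs_gG: "u \<in> hspan y \<Longrightarrow> gG * u \<in> hspan y"
  apply (rule hs_lin)
  subgoal for t by (cases t) (auto simp: mon_def D_rels(3,4) D_rels2 mons)
  by assumption

lemma hs_y: "u \<in> hspan y \<Longrightarrow> y * u \<in> hspan y"
  apply (rule hs_lin)
  subgoal for t by (cases t) (auto simp: mon_def D_rels(3,4) D_rels2 yrels yy right_diff_distrib
      kc_left_comm[of gg] kc_left_comm[of gG] yg yG kc_central[of _ gg, symmetric] kc_central[of _ gG, symmetric]
      intro!: hs_neg hs_diff hs_kc mons hs_kc1)
  by assumption

lemma hs_mult: "u \<in> hspan y \<Longrightarrow> v \<in> hspan y \<Longrightarrow> u * v \<in> hspan y"
proof -
  assume v: "v \<in> hspan y"
  have "mon y t * v \<in> hspan y" for t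
    by (cases t) (auto simp: mon_def mult.assoc intro!: hs_gg hs_gG hs_y v)
  note mv = this
  assume "u \<in> hspan y"
  then obtain l where "u = (\<Sum>t\<in>UNIV. kc (l t) * mon y t)"
    unfolding hspan_def by blast
  then have "u * v = (\<Sum>t\<in>UNIV. kc (l t) * (mon y t * v))"
    by (simp add: sum_distrib_right mult.assoc)
  also have "\<dots> \<in> hspan y" by (rule hs_sum) (simp_all add: hs_kc mv)
  finally show "u * v \<in> hspan y" .
qed

end

lemma UNIV3: "(\<Sum>t\<in>(UNIV::(bool\<times>bool\<times>bool) set). f t) =
  f (False,False,False) + f (False,False,True) + f (False,True,False) + f (False,True,True) +
  f (True,False,False) + f (True,False,True) + f (True,True,False) + f (True,True,True)"
proof -
  have "(UNIV::(bool\<times>bool\<times>bool) set) = {(False,False,False), (False,False,True), (False,True,False), (False,True,True),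
  (True,False,False), (True,False,True), (True,True,False), (True,True,True)}"
  proof (intro set_eqI iffI)
    fix t :: "bool\<times>bool\<times>bool" show "t \<in> {(False,False,False), (False,False,True), (False,True,False), (False,True,True),
  (True,False,False), (True,False,True), (True,True,False), (True,True,True)}"
      by (cases t) (simp, metis (full_types))
  qed simp
  note U = this
  show ?thesis by (subst U) (simp add: add.assoc)
qed

lemma y_props:
  fixes \<alpha> \<beta> :: "'k::field"
  defines "y \<equiv> kc \<alpha> * gx + kc \<beta> * gX"
  shows "y * gg = - (gg * y)" "y * gG = - (gG * y)" "y * y = kc (\<alpha> * \<beta>) * (1 - gg * gG)"
proof -
  have xg: "gx * gg = - (gg * gx)" "gX * gg = - (gg * gX)" "gx * gG = - (gG * gx)" "gX * gG = - (gG * gX)"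
    by (simp_all add: D_rels)
  show "y * gg = - (gg * y)"
    by (simp add: y_def distrib_left distrib_right mult.assoc xg kc_left_comm[of gg])
  show "y * gG = - (gG * y)"
    by (simp add: y_def distrib_left distrib_right mult.assoc xg kc_left_comm[of gG])
  have "y * y = kc (\<alpha>*\<alpha>) * (gx * gx) + kc (\<alpha>*\<beta>) * (gx * gX) + kc (\<beta>*\<alpha>) * (gX * gx) + kc (\<beta>*\<beta>) * (gX * gX)"
    by (simp add: y_def distrib_left distrib_right mult.assoc kc_left_comm[of gx] kc_left_comm[of gX] kc_kc add.assoc)
  also have "\<dots> = kc (\<alpha>*\<beta>) * (gx * gX + gX * gx)"
    by (simp add: D_rels(1,2) distrib_left mult.commute)
  also have "\<dots> = kc (\<alpha> * \<beta>) * (1 - gg * gG)" by (simp add: D_rels(10))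
  finally show "y * y = kc (\<alpha> * \<beta>) * (1 - gg * gG)" .
qed

lemma HD_hspan:
  assumes "a \<in> HD \<alpha> \<beta>"
  shows "a \<in> hspan (kc \<alpha> * gx + kc \<beta> * gX)"
proof -
  let ?y = "kc \<alpha> * gx + kc \<beta> * gX"
  note yp = y_props[of \<alpha> \<beta>]
  have "pj h \<in> hspan ?y" if "h \<in> H_sub \<alpha> \<beta>" for h
    using that
  proof (induction rule: H_sub.induct)
    case one then show ?case by (simp add: pj_one mons)
  next
    case gen_g then show ?case using mons(5) by (simp add: gg_def)
  next
    case gen_G then show ?case using mons(3) by (simp add: gG_def)
  next
    case gen_y then show ?case using mons(2)[of ?y]
      by (simp add: pj_add pj_smult carrier_smult carrier_var gx_def gX_def)
  next
    case (add a b) then show ?case by (simp add: pj_add H_carrier hs_add)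
  next
    case (smult a c) then show ?case by (simp add: pj_smult H_carrier hs_kc)
  next
    case (mult a b) then show ?case by (simp add: pj_mult H_carrier hs_mult[OF yp])
  qed
  then show ?thesis using assms unfolding HD_def by blast
qed


definition e0 :: "'k::field vec" where "e0 = (\<lambda>i. if i = (False,False,False,False) then 1 else 0)"

lemma rhoD_sum: "finite S \<Longrightarrow> rhoD (\<Sum>t\<in>S. f t) v = (\<lambda>i. \<Sum>t\<in>S. rhoD (f t) v i)"
  by (induction S rule: finite_induct) (simp_all add: rhoD_zero rhoD_add)

lemma rhoD_mon: "rhoD (mon y (a,b,d)) v = (if a then rgen Gg else id) ((if b then rgen GG else id) ((if d then rhoD y else id) v))"
  by (simp add: mon_def rhoD_mult rhoD_one rhoD_gen)

lemma rhoD_y: "rhoD (kc \<alpha> * gx + kc \<beta> * gX) v = (\<lambda>i. \<alpha> * rgen Gx v i + \<beta> * rgen GX v i)"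
  by (simp add: rhoD_add rhoD_mult rhoD_kc rhoD_gen)

lemma uniq1:
  fixes \<alpha> \<beta> :: "'k::field"
  assumes b: "\<beta> \<noteq> 0" and u: "u \<in> hspan (kc \<alpha> * gx + kc \<beta> * gX)" and v: "v \<in> hspan (kc \<alpha> * gx + kc \<beta> * gX)"
    and eq: "u + v * gx = 0"
  shows "u = 0 \<and> v = 0"
proof -
  let ?y = "kc \<alpha> * gx + kc \<beta> * gX"
  obtain l where l: "u = (\<Sum>t\<in>UNIV. kc (l t) * mon ?y t)" using u unfolding hspan_def by blast
  obtain l' where l': "v = (\<Sum>t\<in>UNIV. kc (l' t) * mon ?y t)" using v unfolding hspan_def by blast
  have "rhoD (u + v * gx) e0 = (\<lambda>i. 0)" by (simp add: eq rhoD_zero)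
  then have X: "(\<lambda>i. (\<Sum>t\<in>UNIV. l t * rhoD (mon ?y t) e0 i) + (\<Sum>t\<in>UNIV. l' t * rhoD (mon ?y t) (rhoD gx e0) i)) = (\<lambda>i. 0)"
    unfolding l l' by (simp add: rhoD_add rhoD_mult rhoD_sum rhoD_kc)
  have E: "\<And>i. (\<Sum>t\<in>UNIV. l t * rhoD (mon ?y t) e0 i) + (\<Sum>t\<in>UNIV. l' t * rhoD (mon ?y t) (rgen Gx e0) i) = 0"
    using fun_cong[OF X] by (simp add: rhoD_gen)
  note E2 = E[unfolded UNIV3 rhoD_mon rhoD_y]
  have Z: "l t = 0 \<and> l' t = 0" for t
    using E2[of "(False,False,False,False)"] E2[of "(False,False,False,True)"] E2[of "(False,False,True,False)"] E2[of "(False,False,True,True)"] E2[of "(False,True,False,False)"] E2[of "(False,True,False,True)"] E2[of "(False,True,True,False)"] E2[of "(False,True,True,True)"] E2[of "(True,False,False,False)"] E2[of "(True,False,False,True)"] E2[of "(True,False,True,False)"] E2[of "(True,False,True,True)"] E2[of "(True,True,False,False)"] E2[of "(True,True,False,True)"] E2[of "(True,True,True,False)"] E2[of "(True,True,True,True)"] b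
    apply (simp add: e0_def sg_def)
    apply (cases t) subgoal for a b c by (cases a; cases b; cases c) simp_all
    done
  then have "u = 0" "v = 0" unfolding l l' by (simp_all add: kc_zero)
  then show ?thesis by simp
qed

lemma uniq2:
  fixes \<alpha> \<beta> :: "'k::field"
  assumes b: "\<alpha> \<noteq> 0" "\<beta> = 0" and u: "u \<in> hspan (kc \<alpha> * gx + kc \<beta> * gX)" and v: "v \<in> hspan (kc \<alpha> * gx + kc \<beta> * gX)"
    and eq: "u + v * gX = 0"
  shows "u = 0 \<and> v = 0"
proof -
  let ?y = "kc \<alpha> * gx + kc \<beta> * gX"
  obtain l where l: "u = (\<Sum>t\<in>UNIV. kc (l t) * mon ?y t)" using u unfolding hspan_def by blast
  obtain l' where l': "v = (\<Sum>t\<in>UNIV. kc (l' t) * mon ?y t)" using v unfolding hspan_def by blast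
  have "rhoD (u + v * gX) e0 = (\<lambda>i. 0)" by (simp add: eq rhoD_zero)
  then have X: "(\<lambda>i. (\<Sum>t\<in>UNIV. l t * rhoD (mon ?y t) e0 i) + (\<Sum>t\<in>UNIV. l' t * rhoD (mon ?y t) (rhoD gX e0) i)) = (\<lambda>i. 0)"
    unfolding l l' by (simp add: rhoD_add rhoD_mult rhoD_sum rhoD_kc)
  have E: "\<And>i. (\<Sum>t\<in>UNIV. l t * rhoD (mon ?y t) e0 i) + (\<Sum>t\<in>UNIV. l' t * rhoD (mon ?y t) (rgen GX e0) i) = 0"
    using fun_cong[OF X] by (simp add: rhoD_gen)
  note E2 = E[unfolded UNIV3 rhoD_mon rhoD_y]
  have Z: "l t = 0 \<and> l' t = 0" for t
    using E2[of "(False,False,False,False)"] E2[of "(False,False,False,True)"] E2[of "(False,False,True,False)"] E2[of "(False,False,True,True)"] E2[of "(False,True,False,False)"] E2[of "(False,True,False,True)"] E2[of "(False,True,True,False)"] E2[of "(False,True,True,True)"] E2[of "(True,False,False,False)"] E2[of "(True,False,False,True)"] E2[of "(True,False,True,False)"] E2[of "(True,False,True,True)"] E2[of "(True,True,False,False)"] E2[of "(True,True,False,True)"] E2[of "(True,True,True,False)"] E2[of "(True,True,True,True)"] b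
    apply (simp add: e0_def sg_def)
    apply (cases t) subgoal for a b c by (cases a; cases b; cases c) simp_all
    done
  then have "u = 0" "v = 0" unfolding l l' by (simp_all add: kc_zero)
  then show ?thesis by simp
qed

lemma pj_zero_iff: "f \<in> fa_carrier \<Longrightarrow> pj f = 0 \<longleftrightarrow> f \<in> DL2_ideal"
proof -
  assume f: "f \<in> fa_carrier"
  have "pj f = pj fa_zero \<longleftrightarrow> fa_sub f fa_zero \<in> DL2_ideal" by (rule pj_eq_iff[OF f carrier_zero])
  moreover have "fa_sub f fa_zero = f" by (simp add: fa_sub_def fa_zero_def)
  ultimately show ?thesis by (simp add: pj_zero)
qed

lemma mult_zero_fa: "fa_mult (\<lambda>w. 0) b w = 0"
  by (simp add: fa_mult_def)

lemma sumB:
  assumes ne: "(x::'k::field falg) \<noteq> z"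
  shows "fa_sum (\<lambda>b. fa_mult (c b) b) {b \<in> {x, z}. c b \<noteq> fa_zero} = fa_add (fa_mult (c x) x) (fa_mult (c z) z)"
proof (rule ext)
  fix w
  have "fa_sum (\<lambda>b. fa_mult (c b) b) {b \<in> {x, z}. c b \<noteq> fa_zero} w = (\<Sum>b\<in>{x,z}. fa_mult (c b) b w)"
    unfolding fa_sum_def
    by (rule sum.mono_neutral_left) (auto simp: mult_zero_fa fa_zero_def)
  also have "\<dots> = fa_add (fa_mult (c x) x) (fa_mult (c z) z) w" using ne by (simp add: fa_add_def)
  finally show "fa_sum (\<lambda>b. fa_mult (c b) b) {b \<in> {x, z}. c b \<noteq> fa_zero} w = fa_add (fa_mult (c x) x) (fa_mult (c z) z) w" .
qed

theorem mainTheorem5: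
  fixes \<alpha> \<beta> :: "'k::field"
  assumes "algebraically_closed_field TYPE('k)"
    and "(2::'k) \<noteq> 0"
    and "\<alpha> \<noteq> 0 \<or> \<beta> \<noteq> 0"
  shows "DL2_free_left_module_over_H \<alpha> \<beta>"
proof -
  define zf :: "'k falg" where "zf = (if \<beta> \<noteq> 0 then vx else vX)"
  define z :: "'k D" where "z = (if \<beta> \<noteq> 0 then gx else gX)"
  have zf_c: "zf \<in> fa_carrier" by (simp add: zf_def carrier_var)
  have pz: "pj zf = z" by (simp add: zf_def z_def gx_def gX_def)
  have ne: "fa_one \<noteq> zf" by (auto simp: zf_def fa_one_def fa_var_def fun_eq_iff)
  let ?B = "{fa_one, zf}"
  have Bc: "?B \<subseteq> fa_carrier" using zf_c carrier_one by auto
  have uniq: "a \<in> HD \<alpha> \<beta> \<Longrightarrow> b \<in> HD \<alpha> \<beta> \<Longrightarrow> a + b * z = 0 \<Longrightarrow> a = 0 \<and> b = 0" for a b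
  proof (cases "\<beta> \<noteq> 0")
    case True
    assume "a \<in> HD \<alpha> \<beta>" "b \<in> HD \<alpha> \<beta>" "a + b * z = 0"
    then show ?thesis using uniq1[OF True HD_hspan HD_hspan] True by (simp add: z_def)
  next
    case False
    then have b0: "\<beta> = 0" and a0: "\<alpha> \<noteq> 0" using assms(3) by auto
    assume "a \<in> HD \<alpha> \<beta>" "b \<in> HD \<alpha> \<beta>" "a + b * z = 0"
    then show ?thesis using uniq2[OF a0 b0 HD_hspan HD_hspan] False by (simp add: z_def)
  qed
  show ?thesis unfolding DL2_free_left_module_over_H_def
  proof (intro exI[of _ ?B] conjI ballI allI impI)
    show "?B \<subseteq> fa_carrier" by (rule Bc)
  next
    fix f :: "'k falg" assume f: "f \<in> fa_carrier"
    have "pj f \<in> SPn (HD \<alpha> \<beta>) z" by (rule span_D[OF assms(3) z_def f])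
    then obtain a b where ab: "a \<in> HD \<alpha> \<beta>" "b \<in> HD \<alpha> \<beta>" "pj f = a + b * z"
      unfolding SPn_def by blast
    then obtain h1 h2 where h: "h1 \<in> H_sub \<alpha> \<beta>" "h2 \<in> H_sub \<alpha> \<beta>" "a = pj h1" "b = pj h2"
      unfolding HD_def by blast
    define c :: "'k falg \<Rightarrow> 'k falg" where "c = (\<lambda>x. if x = fa_one then h1 else h2)"
    have c1: "c fa_one = h1" "c zf = h2" using ne by (simp_all add: c_def)
    have hc: "h1 \<in> fa_carrier" "h2 \<in> fa_carrier" using h H_carrier by auto
    have "pj f = pj (fa_add (fa_mult h1 fa_one) (fa_mult h2 zf))"
      using ab h hc by (simp add: pj_add pj_mult carrier_mult carrier_one zf_c pj_one pz)
    then have "fa_sub f (fa_add (fa_mult h1 fa_one) (fa_mult h2 zf)) \<in> DL2_ideal"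
      using pj_eq_iff[OF f carrier_add[OF carrier_mult[OF hc(1) carrier_one] carrier_mult[OF hc(2) zf_c]]] by simp
    then have "(\<forall>b\<in>?B. c b \<in> H_sub \<alpha> \<beta>) \<and> finite {b \<in> ?B. c b \<noteq> fa_zero} \<and>
          fa_sub f (fa_sum (\<lambda>b. fa_mult (c b) b) {b \<in> ?B. c b \<noteq> fa_zero}) \<in> DL2_ideal"
    proof -
      have S: "fa_sum (\<lambda>b. fa_mult (c b) b) {b \<in> ?B. c b \<noteq> fa_zero} = fa_add (fa_mult h1 fa_one) (fa_mult h2 zf)"
        using sumB[OF ne, of c] c1 by simp
      show ?thesis unfolding S using h c1 \<open>fa_sub f _ \<in> DL2_ideal\<close> by simp
    qed
    then show "\<exists>c. (\<forall>b\<in>?B. c b \<in> H_sub \<alpha> \<beta>) \<and> finite {b \<in> ?B. c b \<noteq> fa_zero} \<and>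
          fa_sub f (fa_sum (\<lambda>b. fa_mult (c b) b) {b \<in> ?B. c b \<noteq> fa_zero}) \<in> DL2_ideal" by blast
  next
    fix c :: "'k falg \<Rightarrow> 'k falg" and x
    assume H: "(\<forall>b\<in>?B. c b \<in> H_sub \<alpha> \<beta>) \<and> finite {b \<in> ?B. c b \<noteq> fa_zero} \<and>
          fa_sum (\<lambda>b. fa_mult (c b) b) {b \<in> ?B. c b \<noteq> fa_zero} \<in> DL2_ideal"
      and x: "x \<in> ?B"
    have h: "c fa_one \<in> H_sub \<alpha> \<beta>" "c zf \<in> H_sub \<alpha> \<beta>" using H by auto
    have hc: "c fa_one \<in> fa_carrier" "c zf \<in> fa_carrier" using h H_carrier by auto
    have "fa_add (fa_mult (c fa_one) fa_one) (fa_mult (c zf) zf) \<in> DL2_ideal"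
    proof -
      have S: "fa_sum (\<lambda>b. fa_mult (c b) b) {b \<in> ?B. c b \<noteq> fa_zero} = fa_add (fa_mult (c fa_one) fa_one) (fa_mult (c zf) zf)"
        using sumB[OF ne, of c] by simp
      show ?thesis using H unfolding S by simp
    qed
    then have "pj (fa_add (fa_mult (c fa_one) fa_one) (fa_mult (c zf) zf)) = 0"
      using pj_zero_iff[OF carrier_add[OF carrier_mult[OF hc(1) carrier_one] carrier_mult[OF hc(2) zf_c]]] by simp
    then have "pj (c fa_one) + pj (c zf) * z = 0"
      using hc by (simp add: pj_add pj_mult carrier_mult carrier_one zf_c pj_one pz)
    moreover have "pj (c fa_one) \<in> HD \<alpha> \<beta>" "pj (c zf) \<in> HD \<alpha> \<beta>" using h unfolding HD_def by auto
    ultimately have "pj (c fa_one) = 0" "pj (c zf) = 0" using uniq by blast+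
    then have "c fa_one \<in> DL2_ideal" "c zf \<in> DL2_ideal" using pj_zero_iff hc by auto
    then show "c x \<in> DL2_ideal" using x by auto
  qed
qed

end
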